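(* Assume the setting and hypotheses of the context (continuity of the regularization at $P$ w.r.t. $d$, $d(P_n,P)=o_P(r_n^{-1})$ with $(r_n)$ positive diverging, and the majorants $\bar B,\bar\delta$, grids $\mathcal{G}_n$ and choice $\tilde k_n$ defined there). Suppose moreover that $k\mapsto\bar\delta_k(t)$ and $k\mapsto\bar B_k(P)$ are continuous, that the sets $$\mathcal{G}_n^+=\{k\in\mathcal{G}_n:\bar\delta_k(r_n^{-1})\ge\bar B_k(P)\},\qquad\mathcal{G}_n^-=\{k\in\mathcal{G}_n:\bar\delta_k(r_n^{-1})\le\bar B_k(P)\}$$ are non-empty, and that $$\frac{\min_{k\in\mathcal{G}_n^+}\bar\delta_k(r_n^{-1})}{\max_{k\in\mathcal{G}_n^-}\bar\delta_k(r_n^{-1})}=O(1).$$ Then $$\|\psi_{\tilde k_n}(P_n)-\psi(P)\|_\Theta=O_P\left(\inf_{k\in\mathbb{R}_+}\{\bar\delta_k(r_n^{-1})+\bar B_k(P)\}\right).$$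
   Context: Setting: $\mathbb{Z}\subseteq\mathbb{R}^d$; data IID with law $P\in\mathcal{M}$; $\mathbf{P}$ the product probability on $\mathbb{Z}^\infty$ (to which $o_P,O_P$ refer); $ca(\mathbb{Z})$ signed Borel measures of finite variation; $\mathcal{D}$ discretely supported probability measures; $P_n$ the empirical distribution. $\mathcal{M}$ a set of Borel probability measures, $\psi:\mathcal{M}\to\Theta$, $(\Theta,\|\cdot\|_\Theta)$ a normed space, $\mathbb{K}\subseteq\mathbb{R}_+$ unbounded above. A regularization is a family $(\psi_k)_{k\in\mathbb{K}}$, $\psi_k:\mathbb{D}_\psi\subseteq ca(\mathbb{Z})\to\Theta$, $\mathbb{D}_\psi\supseteq\mathcal{M}\cup\mathcal{D}$, with $\|\psi_k(Q)-\psi(Q)\|_\Theta\to0$ for all $Q\in\mathcal{M}$. A modulus of continuity is a continuous non-decreasing $f:\mathbb{R}_+\to\mathbb{R}_+$ with $f(t)=0$ iff $t=0$; the regularization is continuous at $P$ w.r.t. a distance $d$ if there are moduli $(\delta_k)$ with $\|\psi_k(P')-\psi_k(P)\|_\Theta\le\delta_k(d(P',P))$ for all $k$ and $P'\in\mathbb{D}_\psi$. Assume this, and that $(r_n)$ is a positive diverging sequence with $d(P_n,P)=o_P(r_n^{-1})$. $k\mapsto\bar B_k(P)$ is non-increasing $\mathbb{R}_+\to\mathbb{R}_+$ with $\bar B_k(P)\ge\|\psi_k(P)-\psi(P)\|_\Theta$ and $\bar B_k(P)\to0$; for each $n$, $k\mapsto\bar\delta_k(r_n^{-1})$ is non-decreasing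 $\mathbb{R}_+\to\mathbb{R}_+$ with $\bar\delta_k(r_n^{-1})\ge\delta_k(r_n^{-1})$. $\mathcal{G}_n$ is a finite subset of $\mathbb{K}$, $\mathcal{L}_n=\{k\in\mathcal{G}_n:\|\psi_k(P_n)-\psi_{k'}(P_n)\|_\Theta\le4\bar\delta_{k'}(r_n^{-1})\ \forall k'\ge k,\ k'\in\mathcal{G}_n\}$, and $\tilde k_n=\min\mathcal{L}_n$. *)

theory Defs
  imports "HOL-Probability.Probability" "HOL-Library.Landau_Symbols"
begin

definition borelZ :: "'a::topological_space set \<Rightarrow> 'a set set" where
  "borelZ Z = sets (restrict_space borel Z)"

definition real_countably_additive :: "'a set set \<Rightarrow> ('a set \<Rightarrow> real) \<Rightarrow> bool" where
  "real_countably_additive S \<mu> \<longleftrightarrow>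
     (\<forall>A. range A \<subseteq> S \<longrightarrow> disjoint_family A \<longrightarrow> (\<Union>i. A i) \<in> S \<longrightarrow>
          (\<lambda>i. \<mu> (A i)) sums \<mu> (\<Union>i. A i))"

definition finite_variation :: "'a set set \<Rightarrow> ('a set \<Rightarrow> real) \<Rightarrow> bool" where
  "finite_variation S \<mu> \<longleftrightarrow>
     (\<exists>V. \<forall>(A::nat \<Rightarrow> 'a set) n. (\<forall>i<n. A i \<in> S) \<and> disjoint_family_on A {..<n} \<longrightarrow>
          (\<Sum>i<n. \<bar>\<mu> (A i)\<bar>) \<le> V)"

text \<open>ca(Z): signed Borel measures of finite variation on Z (set functions vanishing
  on non-Borel sets, so that the representation is canonical).\<close>
definition ca :: "'a::topological_space set \<Rightarrow> ('a set \<Rightarrow> real) set" where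
  "ca Z = {\<mu>. (\<forall>A. A \<notin> borelZ Z \<longrightarrow> \<mu> A = 0) \<and>
              real_countably_additive (borelZ Z) \<mu> \<and> finite_variation (borelZ Z) \<mu>}"

definition measure_to_ca :: "'a measure \<Rightarrow> ('a set \<Rightarrow> real)" where
  "measure_to_ca Q = (\<lambda>A. if A \<in> sets Q then measure Q A else 0)"

definition discrete_probs :: "'a::topological_space set \<Rightarrow> ('a set \<Rightarrow> real) set" where
  "discrete_probs Z = {\<mu> \<in> ca Z. (\<forall>A\<in>borelZ Z. 0 \<le> \<mu> A) \<and> \<mu> Z = 1 \<and>
                         (\<exists>S. countable S \<and> S \<subseteq> Z \<and> \<mu> S = 1)}"

definition empirical :: "'a::topological_space set \<Rightarrow> (nat \<Rightarrow> 'a) \<Rightarrow> nat \<Rightarrow> ('a set \<Rightarrow> real)" where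
  "empirical Z \<omega> n = (\<lambda>A. if A \<in> borelZ Z then (\<Sum>i<n. indicator A (\<omega> i)) / real n else 0)"

definition outer_prob :: "'w measure \<Rightarrow> 'w set \<Rightarrow> real" where
  "outer_prob M A = (INF B \<in> {B \<in> sets M. A \<subseteq> B}. measure M B)"

definition little_oP :: "'w measure \<Rightarrow> (nat \<Rightarrow> 'w \<Rightarrow> real) \<Rightarrow> (nat \<Rightarrow> real) \<Rightarrow> bool" where
  "little_oP M Y a \<longleftrightarrow> (\<forall>\<eta>>0. \<forall>\<epsilon>>0. \<exists>N. \<forall>n\<ge>N.
       outer_prob M {\<omega> \<in> space M. \<bar>Y n \<omega>\<bar> > \<eta> * a n} < \<epsilon>)"

definition big_OP :: "'w measure \<Rightarrow> (nat \<Rightarrow> 'w \<Rightarrow> real) \<Rightarrow> (nat \<Rightarrow> real) \<Rightarrow> bool" where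
  "big_OP M Y a \<longleftrightarrow> (\<forall>\<epsilon>>0. \<exists>C. \<exists>N. \<forall>n\<ge>N.
       outer_prob M {\<omega> \<in> space M. \<bar>Y n \<omega>\<bar> > C * a n} < \<epsilon>)"

definition modulus :: "(real \<Rightarrow> real) \<Rightarrow> bool" where
  "modulus f \<longleftrightarrow> continuous_on {0..} f \<and> mono_on {0..} f \<and> (\<forall>t\<ge>0. 0 \<le> f t) \<and>
                 (\<forall>t\<ge>0. f t = 0 \<longleftrightarrow> t = 0)"

definition regularization ::
  "'a::topological_space set \<Rightarrow> 'a measure set \<Rightarrow> ('a measure \<Rightarrow> 'th::real_normed_vector) \<Rightarrow> real set
     \<Rightarrow> ('a set \<Rightarrow> real) set \<Rightarrow> (real \<Rightarrow> ('a set \<Rightarrow> real) \<Rightarrow> 'th) \<Rightarrow> bool" where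
  "regularization Z \<M> \<psi> K D\<psi> \<psi>k \<longleftrightarrow>
     D\<psi> \<subseteq> ca Z \<and> measure_to_ca ` \<M> \<subseteq> D\<psi> \<and> discrete_probs Z \<subseteq> D\<psi> \<and>
     (\<forall>Q\<in>\<M>. ((\<lambda>k. \<psi>k k (measure_to_ca Q)) \<longlongrightarrow> \<psi> Q) (at_top \<sqinter> principal K))"

definition reg_continuous_at ::
  "('a set \<Rightarrow> real) set \<Rightarrow> real set \<Rightarrow> (real \<Rightarrow> ('a set \<Rightarrow> real) \<Rightarrow> 'th::real_normed_vector)
     \<Rightarrow> (('a set \<Rightarrow> real) \<Rightarrow> ('a set \<Rightarrow> real) \<Rightarrow> real) \<Rightarrow> (real \<Rightarrow> real \<Rightarrow> real) \<Rightarrow> ('a set \<Rightarrow> real) \<Rightarrow> bool" where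
  "reg_continuous_at D\<psi> K \<psi>k d \<delta> \<mu> \<longleftrightarrow>
     (\<forall>k\<in>K. modulus (\<delta> k)) \<and>
     (\<forall>k\<in>K. \<forall>\<mu>'\<in>D\<psi>. norm (\<psi>k k \<mu>' - \<psi>k k \<mu>) \<le> \<delta> k (d \<mu>' \<mu>))"

definition Lset ::
  "'a::topological_space set \<Rightarrow> (real \<Rightarrow> ('a set \<Rightarrow> real) \<Rightarrow> 'th::real_normed_vector) \<Rightarrow> (real \<Rightarrow> real \<Rightarrow> real)
     \<Rightarrow> (nat \<Rightarrow> real) \<Rightarrow> (nat \<Rightarrow> real set) \<Rightarrow> nat \<Rightarrow> (nat \<Rightarrow> 'a) \<Rightarrow> real set" where
  "Lset Z \<psi>k \<delta>b r G n \<omega> =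
     {k \<in> G n. \<forall>k'\<in>G n. k \<le> k' \<longrightarrow>
        norm (\<psi>k k (empirical Z \<omega> n) - \<psi>k k' (empirical Z \<omega> n)) \<le> 4 * \<delta>b k' (1 / r n)}"

definition ktilde ::
  "'a::topological_space set \<Rightarrow> (real \<Rightarrow> ('a set \<Rightarrow> real) \<Rightarrow> 'th::real_normed_vector) \<Rightarrow> (real \<Rightarrow> real \<Rightarrow> real)
     \<Rightarrow> (nat \<Rightarrow> real) \<Rightarrow> (nat \<Rightarrow> real set) \<Rightarrow> nat \<Rightarrow> (nat \<Rightarrow> 'a) \<Rightarrow> real" where
  "ktilde Z \<psi>k \<delta>b r G n \<omega> = Min (Lset Z \<psi>k \<delta>b r G n \<omega>)"

end

theory Submission
  imports Defs
begin

lemma empirical_discrete: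
  fixes Z :: "'a::euclidean_space set"
  assumes om: "\<forall>i. \<omega> i \<in> Z" and n: "n \<ge> 1"
  shows "empirical Z \<omega> n \<in> discrete_probs Z"
proof -
  let ?\<mu> = "empirical Z \<omega> n"
  have ZB: "Z \<in> borelZ Z" unfolding borelZ_def sets_restrict_space by auto
  have SB: "\<omega> ` {..<n} \<in> borelZ Z"
  proof -
    have "\<omega> ` {..<n} \<in> sets borel" by (intro borel_closed finite_imp_closed) auto
    moreover have "\<omega> ` {..<n} = Z \<inter> \<omega> ` {..<n}" using om by auto
    ultimately show ?thesis unfolding borelZ_def sets_restrict_space by blast
  qed
  have ca1: "real_countably_additive (borelZ Z) ?\<mu>"
    unfolding real_countably_additive_def
  proof (intro allI impI)
    fix A :: "nat \<Rightarrow> 'a set"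
    assume r: "range A \<subseteq> borelZ Z" and dj: "disjoint_family A" and U: "(\<Union>i. A i) \<in> borelZ Z"
    have "(\<lambda>i. \<Sum>j<n. indicator (A i) (\<omega> j)::real) sums (\<Sum>j<n. indicator (\<Union>i. A i) (\<omega> j))"
      using dj by (intro sums_sum indicator_sums) (auto simp: disjoint_family_on_def)
    then have "(\<lambda>i. (\<Sum>j<n. indicator (A i) (\<omega> j)::real) / real n) sums ((\<Sum>j<n. indicator (\<Union>i. A i) (\<omega> j)) / real n)"
      by (intro sums_divide)
    moreover have "\<And>i. A i \<in> borelZ Z" using r by auto
    ultimately show "(\<lambda>i. ?\<mu> (A i)) sums ?\<mu> (\<Union>i. A i)"
      using U unfolding empirical_def by simp
  qed
  have fv: "finite_variation (borelZ Z) ?\<mu>"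
    unfolding finite_variation_def
  proof (intro exI allI impI)
    fix A :: "nat \<Rightarrow> 'a set" and m
    assume h: "(\<forall>i<m. A i \<in> borelZ Z) \<and> disjoint_family_on A {..<m}"
    have "(\<Sum>i<m. \<bar>?\<mu> (A i)\<bar>) = (\<Sum>i<m. (\<Sum>j<n. indicator (A i) (\<omega> j)::real) / real n)"
      using h by (intro sum.cong) (auto simp: empirical_def abs_of_nonneg sum_nonneg)
    also have "\<dots> = (\<Sum>j<n. (\<Sum>i<m. indicator (A i) (\<omega> j)::real)) / real n"
      by (simp add: sum_divide_distrib[symmetric] sum.swap[of _ "{..<m}"])
    also have "\<dots> = (\<Sum>j<n. indicator (\<Union>(A ` {..<m})) (\<omega> j)::real) / real n"
      using h by (simp add: indicator_UN_disjoint)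
    also have "\<dots> \<le> (\<Sum>j<n. 1::real) / real n"
      by (intro divide_right_mono sum_mono) (auto simp: indicator_def)
    also have "\<dots> = 1" using n by simp
    finally show "(\<Sum>i<m. \<bar>?\<mu> (A i)\<bar>) \<le> 1" .
  qed
  have mZ: "?\<mu> Z = 1" using ZB om n by (simp add: empirical_def)
  have mS: "?\<mu> (\<omega> ` {..<n}) = 1" using SB n by (simp add: empirical_def)
  show ?thesis
    unfolding discrete_probs_def ca_def
    using ca1 fv mZ mS SB om n
    by (auto simp: empirical_def intro!: exI[of _ "\<omega> ` {..<n}"] sum_nonneg divide_nonneg_nonneg)
qed

lemma outer_prob_mono:
  assumes "A \<subseteq> B" "B \<subseteq> space M"
  shows "outer_prob M A \<le> outer_prob M B"
  unfolding outer_prob_def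
  by (rule cINF_superset_mono) (use assms in \<open>auto intro: bdd_belowI[of _ 0]\<close>)

theorem proposition2:
  fixes Z :: "'a::euclidean_space set"
    and P :: "'a measure"
    and \<M> :: "'a measure set"
    and \<psi> :: "'a measure \<Rightarrow> 'th::real_normed_vector"
    and \<psi>k :: "real \<Rightarrow> ('a set \<Rightarrow> real) \<Rightarrow> 'th"
    and D\<psi> :: "('a set \<Rightarrow> real) set"
    and K :: "real set"
    and d :: "('a set \<Rightarrow> real) \<Rightarrow> ('a set \<Rightarrow> real) \<Rightarrow> real"
    and \<delta> :: "real \<Rightarrow> real \<Rightarrow> real"
    and r :: "nat \<Rightarrow> real"
    and Bb :: "real \<Rightarrow> real"
    and \<delta>b :: "real \<Rightarrow> real \<Rightarrow> real"
    and G :: "nat \<Rightarrow> real set"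
  assumes model: "\<forall>Q\<in>\<M>. prob_space Q \<and> space Q = Z \<and> sets Q = borelZ Z"
    and P_in: "P \<in> \<M>"
    and K_pos: "K \<subseteq> {0..}"
    and K_unbounded: "\<forall>x. \<exists>k\<in>K. x < k"
    and reg: "regularization Z \<M> \<psi> K D\<psi> \<psi>k"
    and d_nonneg: "\<forall>\<mu>\<in>D\<psi>. \<forall>\<mu>'\<in>D\<psi>. 0 \<le> d \<mu> \<mu>'"
    and cont: "reg_continuous_at D\<psi> K \<psi>k d \<delta> (measure_to_ca P)"
    and r_pos: "\<forall>n. 0 < r n"
    and r_div: "filterlim r at_top sequentially"
    and rate: "little_oP (PiM UNIV (\<lambda>_::nat. P))
                 (\<lambda>n \<omega>. d (empirical Z \<omega> n) (measure_to_ca P)) (\<lambda>n. 1 / r n)"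
    and Bb_antimono: "antimono_on {0..} Bb"
    and Bb_nonneg: "\<forall>k\<ge>0. 0 \<le> Bb k"
    and Bb_bias: "\<forall>k\<in>K. norm (\<psi>k k (measure_to_ca P) - \<psi> P) \<le> Bb k"
    and Bb_lim: "(Bb \<longlongrightarrow> 0) at_top"
    and \<delta>b_mono: "\<forall>n. mono_on {0..} (\<lambda>k. \<delta>b k (1 / r n))"
    and \<delta>b_nonneg: "\<forall>n. \<forall>k\<ge>0. 0 \<le> \<delta>b k (1 / r n)"
    and \<delta>b_ge: "\<forall>n. \<forall>k\<in>K. \<delta> k (1 / r n) \<le> \<delta>b k (1 / r n)"
    and G_fin: "\<forall>n. finite (G n)"
    and G_sub: "\<forall>n. G n \<subseteq> K"
    and \<delta>b_cont: "\<forall>t\<ge>0. continuous_on {0..} (\<lambda>k. \<delta>b k t)"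
    and Bb_cont: "continuous_on {0..} Bb"
    and Gplus_ne: "\<forall>n. {k \<in> G n. Bb k \<le> \<delta>b k (1 / r n)} \<noteq> {}"
    and Gminus_ne: "\<forall>n. {k \<in> G n. \<delta>b k (1 / r n) \<le> Bb k} \<noteq> {}"
    and ratio: "(\<lambda>n. Min ((\<lambda>k. \<delta>b k (1 / r n)) ` {k \<in> G n. Bb k \<le> \<delta>b k (1 / r n)})
                    / Max ((\<lambda>k. \<delta>b k (1 / r n)) ` {k \<in> G n. \<delta>b k (1 / r n) \<le> Bb k}))
                \<in> O(\<lambda>_. 1)"
  shows "big_OP (PiM UNIV (\<lambda>_::nat. P))
           (\<lambda>n \<omega>. norm (\<psi>k (ktilde Z \<psi>k \<delta>b r G n \<omega>) (empirical Z \<omega> n) - \<psi> P))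
           (\<lambda>n. INF k\<in>{0..}. \<delta>b k (1 / r n) + Bb k)"
  proof -
  obtain c where c_pos: "c > 0" and evc:
    "eventually (\<lambda>n. norm (Min ((\<lambda>k. \<delta>b k (1 / r n)) ` {k \<in> G n. Bb k \<le> \<delta>b k (1 / r n)})
                    / Max ((\<lambda>k. \<delta>b k (1 / r n)) ` {k \<in> G n. \<delta>b k (1 / r n) \<le> Bb k}))
               \<le> c * norm (1::real)) sequentially"
    using ratio by (elim landau_o.bigE) auto
  then obtain N2 where N2: "\<And>n. n \<ge> N2 \<Longrightarrow>
      norm (Min ((\<lambda>k. \<delta>b k (1 / r n)) ` {k \<in> G n. Bb k \<le> \<delta>b k (1 / r n)})
                    / Max ((\<lambda>k. \<delta>b k (1 / r n)) ` {k \<in> G n. \<delta>b k (1 / r n) \<le> Bb k}))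
               \<le> c * norm (1::real)"
    unfolding eventually_sequentially by blast
  let ?M = "PiM UNIV (\<lambda>_::nat. P)"
  have spP: "space P = Z" using model P_in by auto
  have spM: "space ?M = {\<omega>. \<forall>i. \<omega> i \<in> Z}" using spP by (auto simp: space_PiM PiE_def Pi_def)
  have PmD: "measure_to_ca P \<in> D\<psi>" using reg P_in unfolding regularization_def by auto
  have discD: "discrete_probs Z \<subseteq> D\<psi>" using reg unfolding regularization_def by auto
  have Kmod: "\<forall>k\<in>K. modulus (\<delta> k)" and Kcont: "\<forall>k\<in>K. \<forall>\<mu>'\<in>D\<psi>. norm (\<psi>k k \<mu>' - \<psi>k k (measure_to_ca P)) \<le> \<delta> k (d \<mu>' (measure_to_ca P))"
    using cont unfolding reg_continuous_at_def by auto
  have key: "norm (\<psi>k (ktilde Z \<psi>k \<delta>b r G n \<omega>) (empirical Z \<omega> n) - \<psi> P)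
             \<le> (6 * c) * (INF k\<in>{0..}. \<delta>b k (1 / r n) + Bb k)"
    if om: "\<omega> \<in> space ?M" and n1: "n \<ge> 1" and nN2: "n \<ge> N2"
       and dle0: "\<not> \<bar>d (empirical Z \<omega> n) (measure_to_ca P)\<bar> > 1 * (1 / r n)" for n \<omega>
  proof -
    define t where "t = 1 / r n"
    have tpos: "t > 0" using r_pos unfolding t_def by auto
    define Pn where "Pn = empirical Z \<omega> n"
    define Pm where "Pm = measure_to_ca P"
    have PnD: "Pn \<in> D\<psi>" unfolding Pn_def
      using empirical_discrete[of \<omega> Z n] om spM n1 discD by auto
    have d0: "0 \<le> d Pn Pm" using d_nonneg PnD PmD unfolding Pm_def by auto
    have dle: "d Pn Pm \<le> t" using dle0 d0 unfolding t_def Pn_def Pm_def by auto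
    have est: "norm (\<psi>k k Pn - \<psi>k k Pm) \<le> \<delta>b k t" if kK: "k \<in> K" for k
    proof -
      have "norm (\<psi>k k Pn - \<psi>k k Pm) \<le> \<delta> k (d Pn Pm)"
        using Kcont kK PnD unfolding Pm_def by auto
      also have "\<dots> \<le> \<delta> k t"
      proof -
        have "mono_on {0..} (\<delta> k)" using Kmod kK unfolding modulus_def by blast
        then show ?thesis using d0 dle by (simp add: monotone_on_def)
      qed
      also have "\<dots> \<le> \<delta>b k t" using \<delta>b_ge kK unfolding t_def by auto
      finally show ?thesis .
    qed
    have bias: "norm (\<psi>k k Pm - \<psi> P) \<le> Bb k" if "k \<in> K" for k
      using Bb_bias that unfolding Pm_def by auto
    have GK: "G n \<subseteq> K" using G_sub by auto
    have K0: "\<And>k. k \<in> K \<Longrightarrow> k \<ge> 0" using K_pos by auto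
    have dbmono: "\<And>a b. a \<in> K \<Longrightarrow> b \<in> K \<Longrightarrow> a \<le> b \<Longrightarrow> \<delta>b a t \<le> \<delta>b b t"
      using \<delta>b_mono K0 unfolding t_def monotone_on_def by (meson atLeast_iff)
    have dbmono0: "\<And>a b. 0 \<le> a \<Longrightarrow> a \<le> b \<Longrightarrow> \<delta>b a t \<le> \<delta>b b t"
      using \<delta>b_mono unfolding t_def monotone_on_def by (meson atLeast_iff order_trans)
    have Bbanti: "\<And>a b. 0 \<le> a \<Longrightarrow> a \<le> b \<Longrightarrow> Bb b \<le> Bb a"
      using Bb_antimono unfolding monotone_on_def by (meson atLeast_iff order_trans)
    have db0: "\<And>k. 0 \<le> k \<Longrightarrow> 0 \<le> \<delta>b k t" using \<delta>b_nonneg unfolding t_def by blast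
    define Gp where "Gp = {k \<in> G n. Bb k \<le> \<delta>b k t}"
    define Gm where "Gm = {k \<in> G n. \<delta>b k t \<le> Bb k}"
    have Gnf: "finite (G n)" using G_fin by blast
    have Gpf: "finite Gp" "Gp \<noteq> {}"
      using finite_subset[OF _ Gnf, of Gp] Gplus_ne unfolding Gp_def t_def by blast+
    have Gmf: "finite Gm" "Gm \<noteq> {}"
      using finite_subset[OF _ Gnf, of Gm] Gminus_ne unfolding Gm_def t_def by blast+
    define k1 where "k1 = Min Gp"
    have k1Gp: "k1 \<in> Gp" using Gpf unfolding k1_def by auto
    have k1G: "k1 \<in> G n" and k1K: "k1 \<in> K" and k1B: "Bb k1 \<le> \<delta>b k1 t"
      using k1Gp GK unfolding Gp_def by auto
    have k1le: "\<And>k. k \<in> Gp \<Longrightarrow> k1 \<le> k" using Gpf unfolding k1_def by auto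
    have k1L: "k1 \<in> Lset Z \<psi>k \<delta>b r G n \<omega>"
      unfolding Lset_def
    proof (intro CollectI conjI ballI impI k1G)
      fix k' assume k'G: "k' \<in> G n" and le: "k1 \<le> k'"
      have k'K: "k' \<in> K" using k'G GK by auto
      have "Bb k' \<le> Bb k1" using Bbanti K0 k1K le by auto
      have "\<delta>b k1 t \<le> \<delta>b k' t" using dbmono k1K k'K le by auto
      have "norm (\<psi>k k1 Pn - \<psi>k k' Pn) \<le> (\<delta>b k1 t + Bb k1) + (Bb k' + \<delta>b k' t)"
      proof (rule norm_diff_triangle_le[where y = "\<psi> P"])
        show "norm (\<psi>k k1 Pn - \<psi> P) \<le> \<delta>b k1 t + Bb k1"
          by (rule norm_diff_triangle_le[where y = "\<psi>k k1 Pm"]) (use est bias k1K in auto)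
        show "norm (\<psi> P - \<psi>k k' Pn) \<le> Bb k' + \<delta>b k' t"
          by (rule norm_diff_triangle_le[where y = "\<psi>k k' Pm"])
             (use est[OF k'K] bias[OF k'K] in \<open>auto simp: norm_minus_commute\<close>)
      qed
      also have "\<dots> \<le> 4 * \<delta>b k' t"
        using \<open>Bb k' \<le> Bb k1\<close> \<open>\<delta>b k1 t \<le> \<delta>b k' t\<close> k1B by auto
      finally show "norm (\<psi>k k1 (empirical Z \<omega> n) - \<psi>k k' (empirical Z \<omega> n)) \<le> 4 * \<delta>b k' (1 / r n)"
        unfolding Pn_def t_def .
    qed
    define kt where "kt = ktilde Z \<psi>k \<delta>b r G n \<omega>"
    have Lfin: "finite (Lset Z \<psi>k \<delta>b r G n \<omega>)"
      by (rule finite_subset[OF _ Gnf]) (auto simp: Lset_def)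
    have ktL: "kt \<in> Lset Z \<psi>k \<delta>b r G n \<omega>" unfolding kt_def ktilde_def
      using Lfin k1L by (intro Min_in) auto
    have ktle: "kt \<le> k1" unfolding kt_def ktilde_def using Lfin k1L by auto
    have "norm (\<psi>k kt Pn - \<psi>k k1 Pn) \<le> 4 * \<delta>b k1 t"
      using ktL ktle k1G unfolding Lset_def Pn_def t_def by auto
    moreover have "norm (\<psi>k k1 Pn - \<psi> P) \<le> \<delta>b k1 t + Bb k1"
      by (rule norm_diff_triangle_le[where y = "\<psi>k k1 Pm"]) (use est bias k1K in auto)
    ultimately have Y6: "norm (\<psi>k kt Pn - \<psi> P) \<le> 6 * \<delta>b k1 t"
      using k1B norm_diff_triangle_le[of "\<psi>k kt Pn" "\<psi>k k1 Pn" "4 * \<delta>b k1 t" "\<psi> P" "\<delta>b k1 t + Bb k1"]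
      by auto
    define mn where "mn = Min ((\<lambda>k. \<delta>b k t) ` Gp)"
    define mx where "mx = Max ((\<lambda>k. \<delta>b k t) ` Gm)"
    have "mn \<in> (\<lambda>k. \<delta>b k t) ` Gp" unfolding mn_def using Gpf by (intro Min_in) auto
    then obtain kp where kp: "kp \<in> Gp" "mn = \<delta>b kp t" by auto
    have "kp \<in> K" using kp(1) GK unfolding Gp_def by blast
    then have k1mn: "\<delta>b k1 t \<le> mn" using kp k1le[OF kp(1)] dbmono[OF k1K] by simp
    have "mx \<in> (\<lambda>k. \<delta>b k t) ` Gm" unfolding mx_def using Gmf by (intro Max_in) auto
    then obtain k2 where k2: "k2 \<in> Gm" "mx = \<delta>b k2 t" by auto
    have k2K: "k2 \<in> K" and k2B: "\<delta>b k2 t \<le> Bb k2" using k2 GK unfolding Gm_def by auto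
    have "0 < \<delta> k2 t"
    proof -
      have m: "modulus (\<delta> k2)" using Kmod k2K by blast
      have a: "0 \<le> \<delta> k2 t" using m tpos unfolding modulus_def by simp
      have b: "\<delta> k2 t \<noteq> 0" using m tpos unfolding modulus_def by simp
      show ?thesis using a b by linarith
    qed
    moreover have "\<delta> k2 t \<le> \<delta>b k2 t" using \<delta>b_ge k2K unfolding t_def by blast
    ultimately have mxpos: "0 < mx" using k2 by linarith
    have mxinf: "mx \<le> (INF k\<in>{0..}. \<delta>b k t + Bb k)"
    proof (rule cINF_greatest)
      fix k :: real assume "k \<in> {0..}"
      then have k0: "0 \<le> k" by auto
      show "mx \<le> \<delta>b k t + Bb k"
      proof (cases "k2 \<le> k")
        case True
        have "\<delta>b k2 t \<le> \<delta>b k t" using dbmono0[OF K0[OF k2K] True] .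
        moreover have "0 \<le> Bb k" using Bb_nonneg k0 by blast
        ultimately show ?thesis using k2(2) by linarith
      next
        case False
        then have "k \<le> k2" by linarith
        then have "Bb k2 \<le> Bb k" using Bbanti[OF k0] by blast
        moreover have "0 \<le> \<delta>b k t" using db0[OF k0] .
        ultimately show ?thesis using k2(2) k2B by linarith
      qed
    qed simp
    have "\<bar>mn / mx\<bar> \<le> c" using N2[OF nN2] unfolding mn_def mx_def Gp_def Gm_def t_def by simp
    then have "mn / mx \<le> c" using abs_ge_self[of "mn / mx"] by linarith
    then have "mn \<le> c * mx" using mxpos by (simp add: divide_le_eq)
    then have "norm (\<psi>k kt Pn - \<psi> P) \<le> 6 * (c * mx)" using Y6 k1mn by auto
    also have "\<dots> \<le> 6 * (c * (INF k\<in>{0..}. \<delta>b k t + Bb k))"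
      using mxinf c_pos by auto
    finally show ?thesis unfolding kt_def Pn_def t_def by simp
  qed
  show ?thesis
    unfolding big_OP_def
  proof (intro allI impI)
    fix \<epsilon> :: real assume eps: "\<epsilon> > 0"
    obtain N1 where N1: "\<And>n. n \<ge> N1 \<Longrightarrow> outer_prob ?M {\<omega> \<in> space ?M.
        \<bar>d (empirical Z \<omega> n) (measure_to_ca P)\<bar> > 1 * (1 / r n)} < \<epsilon>"
      using rate[unfolded little_oP_def, rule_format, OF zero_less_one eps] by blast
    show "\<exists>C N. \<forall>n\<ge>N. outer_prob ?M {\<omega> \<in> space ?M.
        \<bar>norm (\<psi>k (ktilde Z \<psi>k \<delta>b r G n \<omega>) (empirical Z \<omega> n) - \<psi> P)\<bar>
          > C * (INF k\<in>{0..}. \<delta>b k (1 / r n) + Bb k)} < \<epsilon>"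
    proof (intro exI allI impI)
      fix n assume nN: "max (max N1 N2) 1 \<le> n"
      have "outer_prob ?M {\<omega> \<in> space ?M.
        \<bar>norm (\<psi>k (ktilde Z \<psi>k \<delta>b r G n \<omega>) (empirical Z \<omega> n) - \<psi> P)\<bar>
          > (6 * c) * (INF k\<in>{0..}. \<delta>b k (1 / r n) + Bb k)}
        \<le> outer_prob ?M {\<omega> \<in> space ?M.
        \<bar>d (empirical Z \<omega> n) (measure_to_ca P)\<bar> > 1 * (1 / r n)}"
      proof (rule outer_prob_mono)
        show "{\<omega> \<in> space ?M.
        \<bar>norm (\<psi>k (ktilde Z \<psi>k \<delta>b r G n \<omega>) (empirical Z \<omega> n) - \<psi> P)\<bar>
          > (6 * c) * (INF k\<in>{0..}. \<delta>b k (1 / r n) + Bb k)}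
        \<subseteq> {\<omega> \<in> space ?M.
        \<bar>d (empirical Z \<omega> n) (measure_to_ca P)\<bar> > 1 * (1 / r n)}"
        proof (rule subsetI)
          fix \<omega> assume "\<omega> \<in> {\<omega> \<in> space ?M.
            \<bar>norm (\<psi>k (ktilde Z \<psi>k \<delta>b r G n \<omega>) (empirical Z \<omega> n) - \<psi> P)\<bar>
            > (6 * c) * (INF k\<in>{0..}. \<delta>b k (1 / r n) + Bb k)}"
          then have om: "\<omega> \<in> space ?M" and gt: "norm (\<psi>k (ktilde Z \<psi>k \<delta>b r G n \<omega>) (empirical Z \<omega> n) - \<psi> P)
            > (6 * c) * (INF k\<in>{0..}. \<delta>b k (1 / r n) + Bb k)" by auto
          have "n \<ge> 1" "n \<ge> N2" using nN by auto
          then have "\<bar>d (empirical Z \<omega> n) (measure_to_ca P)\<bar> > 1 * (1 / r n)"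
            using key[OF om] gt by (meson not_le)
          then show "\<omega> \<in> {\<omega> \<in> space ?M.
            \<bar>d (empirical Z \<omega> n) (measure_to_ca P)\<bar> > 1 * (1 / r n)}" using om by blast
        qed
      qed auto
      also have "\<dots> < \<epsilon>" using N1 nN by auto
      finally show "outer_prob ?M {\<omega> \<in> space ?M.
        \<bar>norm (\<psi>k (ktilde Z \<psi>k \<delta>b r G n \<omega>) (empirical Z \<omega> n) - \<psi> P)\<bar>
          > (6 * c) * (INF k\<in>{0..}. \<delta>b k (1 / r n) + Bb k)} < \<epsilon>" .
    qed
  qed
qed

end
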